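(* Let $\gamma>0$ and let $H$ be a $3$-graph of order $n$ with $\delta_2(H)\ge(1/2-\gamma)n$. Suppose $X,Y$ is a bipartition of $V(H)$. Let $x,x'\in X$ and $y_1,y_2\in Y$ be such that $xy_1y_2,\,xx'y_1,\,xx'y_2\in E(H)$. Then at least one of the following holds: (a) $\{x,x',y_1,y_2\}$ is contained in at least $\gamma n/4$ $5$-sets that span $(X,Y)$-bridges of length $1$; (b) there are at least $\gamma n/4$ copies $K$ of $K_4^3$ in $H$ with $|V(K)\cap X|=2=|V(K)\cap Y|$ and $|V(K)\cap\{x,x',y_1,y_2\}|=3$; (c) $(1/2-15\gamma/4)n\le|X|,|Y|\le(1/2+15\gamma/4)n$ and $xx'y_1$ is $(26\gamma,X,Y)$-typical.
   Context: $\delta_2(H)$ is the minimum over pairs of distinct vertices of the number of edges containing the pair. $K_4^3$ is the complete $3$-graph on $4$ vertices (copies counted as $4$-sets all of whose triples are edges); $K_4^-$ is the $3$-graph with $4$ vertices and $3$ edges. A set $S$ is an $(x,y)$-connector of length $1$ if $S\cap\{x,y\}=\emptyset$, $|S|=3$, and both $S\cup\{x\}$ and $S\cup\{y\}$ span copies of $K_4^-$ in $H$. A triple $(x_0,y_0,S)$ is an $(X,Y)$-bridge of length $1$ if $x_0\in X$, $y_0\in Y$ and $S$ is an $(x_0,y_0)$-connector of length $1$; a $5$-set $Z$ spans an $(X,Y)$-bridge of length $1$ if $Z=S\cup\{x_0,y_0\}$ for some such bridge. Write $N(uv)$ for the set of $w$ with $uvw\in E(H)$, $N(uv,Z)=N(uv)\cap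 Z$, $\deg(uv,Z)=|N(uv,Z)|$. For $\rho>0$, a triple $xx'y$ with $x,x'\in X$, $y\in Y$ is $(\rho,X,Y)$-typical if (T1) $\deg(xx',Y)\ge|Y|-\rho n$, (T2) $|N(xy,X)\cap N(x'y,X)|\le\rho n$, and (T3) $|X|-\rho n\le\deg(xy,X)+\deg(x'y,X)$. *)

theory Defs
  imports Complex_Main
begin

definition three_graph :: "'a set \<Rightarrow> 'a set set \<Rightarrow> bool" where
  "three_graph V E \<longleftrightarrow> finite V \<and> (\<forall>e\<in>E. e \<subseteq> V \<and> card e = 3)"

definition nbh :: "'a set \<Rightarrow> 'a set set \<Rightarrow> 'a \<Rightarrow> 'a \<Rightarrow> 'a set" where
  "nbh V E u v = {w \<in> V. {u, v, w} \<in> E}"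

definition min_codeg :: "'a set \<Rightarrow> 'a set set \<Rightarrow> nat" where
  "min_codeg V E = Min {card (nbh V E u v) | u v. u \<in> V \<and> v \<in> V \<and> u \<noteq> v}"

definition spans_K4minus :: "'a set set \<Rightarrow> 'a set \<Rightarrow> bool" where
  "spans_K4minus E T \<longleftrightarrow> card T = 4 \<and> card {e. e \<subseteq> T \<and> card e = 3 \<and> e \<in> E} \<ge> 3"

definition is_K4 :: "'a set set \<Rightarrow> 'a set \<Rightarrow> bool" where
  "is_K4 E T \<longleftrightarrow> card T = 4 \<and> (\<forall>e. e \<subseteq> T \<and> card e = 3 \<longrightarrow> e \<in> E)"

definition connector1 :: "'a set \<Rightarrow> 'a set set \<Rightarrow> 'a \<Rightarrow> 'a \<Rightarrow> 'a set \<Rightarrow> bool" where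
  "connector1 V E x y S \<longleftrightarrow> S \<subseteq> V \<and> S \<inter> {x, y} = {} \<and> card S = 3
     \<and> spans_K4minus E (S \<union> {x}) \<and> spans_K4minus E (S \<union> {y})"

definition bridge1 :: "'a set \<Rightarrow> 'a set set \<Rightarrow> 'a set \<Rightarrow> 'a set \<Rightarrow> 'a \<Rightarrow> 'a \<Rightarrow> 'a set \<Rightarrow> bool" where
  "bridge1 V E X Y x0 y0 S \<longleftrightarrow> x0 \<in> X \<and> y0 \<in> Y \<and> connector1 V E x0 y0 S"

definition spans_bridge1 :: "'a set \<Rightarrow> 'a set set \<Rightarrow> 'a set \<Rightarrow> 'a set \<Rightarrow> 'a set \<Rightarrow> bool" where
  "spans_bridge1 V E X Y Z \<longleftrightarrow> card Z = 5 \<and>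
     (\<exists>x0 y0 S. bridge1 V E X Y x0 y0 S \<and> Z = S \<union> {x0, y0})"

definition typical :: "'a set \<Rightarrow> 'a set set \<Rightarrow> real \<Rightarrow> 'a set \<Rightarrow> 'a set \<Rightarrow> 'a \<Rightarrow> 'a \<Rightarrow> 'a \<Rightarrow> bool" where
  "typical V E \<rho> X Y x x' y \<longleftrightarrow> x \<in> X \<and> x' \<in> X \<and> y \<in> Y \<and>
     real (card (nbh V E x x' \<inter> Y)) \<ge> real (card Y) - \<rho> * real (card V) \<and>
     real (card (nbh V E x y \<inter> nbh V E x' y \<inter> X)) \<le> \<rho> * real (card V) \<and>
     real (card X) - \<rho> * real (card V) \<le> real (card (nbh V E x y \<inter> X)) + real (card (nbh V E x' y \<inter> X))"

end

theory Submission
  imports Defs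
begin
lemma neq_by: "z \<in> B \<Longrightarrow> z \<notin> A \<Longrightarrow> A \<noteq> B" by blast

lemma K4m_count:
  assumes d: "distinct [a,b,c,d]"
    and cnt: "3 \<le> of_bool ({a,b,c} \<in> E) + of_bool ({a,b,d} \<in> E) + of_bool ({a,c,d} \<in> E) + (of_bool ({b,c,d} \<in> E)::nat)"
  shows "spans_K4minus E {a,b,c,d}"
proof -
  let ?Q = "{{a,b,c},{a,b,d},{a,c,d},{b,c,d}}"
  have dist0: "{a,b,c} \<noteq> {a,b,d}" by (rule neq_by[of d]) (use d in auto)
  have dist1: "{a,b,c} \<noteq> {a,c,d}" by (rule neq_by[of d]) (use d in auto)
  have dist2: "{a,b,c} \<noteq> {b,c,d}" by (rule neq_by[of d]) (use d in auto)
  have dist3: "{a,b,d} \<noteq> {a,c,d}" by (rule neq_by[of c]) (use d in auto)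
  have dist4: "{a,b,d} \<noteq> {b,c,d}" by (rule neq_by[of c]) (use d in auto)
  have dist5: "{a,c,d} \<noteq> {b,c,d}" by (rule neq_by[of b]) (use d in auto)
  note dist = dist0 dist1 dist2 dist3 dist4 dist5
  have "(\<Sum>e\<in>?Q. (of_bool (e \<in> E)::nat)) = of_bool ({a,b,c} \<in> E) + of_bool ({a,b,d} \<in> E) + of_bool ({a,c,d} \<in> E) + of_bool ({b,c,d} \<in> E)"
    using dist by (simp add: add.assoc)
  moreover have "(\<Sum>e\<in>?Q. (of_bool (e \<in> E)::nat)) = card (?Q \<inter> {e. e \<in> E})"
    by simp
  ultimately have c3: "3 \<le> card (?Q \<inter> {e. e \<in> E})" using cnt by simp
  have sub: "?Q \<inter> {e. e \<in> E} \<subseteq> {e. e \<subseteq> {a,b,c,d} \<and> card e = 3 \<and> e \<in> E}"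
    using d by auto
  have fin: "finite {e. e \<subseteq> {a,b,c,d} \<and> card e = 3 \<and> e \<in> E}"
    by (rule finite_subset[of _ "Pow {a,b,c,d}"]) auto
  have "card {a,b,c,d} = 4" using d by simp
  then show ?thesis unfolding spans_K4minus_def
    using card_mono[OF fin sub] c3 by linarith
qed

lemma K4_intro:
  assumes d: "distinct [a,b,c,d]"
    and "{a,b,c} \<in> E" "{a,b,d} \<in> E" "{a,c,d} \<in> E" "{b,c,d} \<in> E"
  shows "is_K4 E {a,b,c,d}"
  unfolding is_K4_def
proof (intro conjI allI impI)
  show "card {a,b,c,d} = 4" using d by simp
  fix e assume e: "e \<subseteq> {a,b,c,d} \<and> card e = 3"
  let ?Q = "{a,b,c,d}"
  have "card (?Q - e) = 1" using e d
    by (subst card_Diff_subset) (auto intro: finite_subset)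
  then obtain z where z: "?Q - e = {z}" by (rule card_1_singletonE)
  have "?Q - (?Q - e) = e" by (rule double_diff) (use e in auto)
  then have ee: "e = ?Q - {z}" using z by simp
  have "z \<in> ?Q" using z by auto
  then consider "z = a" | "z = b" | "z = c" | "z = d" by blast
  then show "e \<in> E"
  proof cases
    case 1 then have "e = {b,c,d}" using ee d by auto
    then show ?thesis using assms by simp
  next
    case 2 then have "e = {a,c,d}" using ee d by auto
    then show ?thesis using assms by simp
  next
    case 3 then have "e = {a,b,d}" using ee d by auto
    then show ?thesis using assms by simp
  next
    case 4 then have "e = {a,b,c}" using ee d by auto
    then show ?thesis using assms by simp
  qed
qed

lemma p1X:
  fixes A C F be ka :: bool
  assumes "(A\<and>C \<or> A\<and>F \<or> C\<and>F) \<Longrightarrow> be"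
  shows "2*of_bool A + 2*of_bool C + 2*of_bool F + 1 \<le> (3::real) + 4*of_bool be + 2*of_bool ka"
  using assms by (cases be; cases ka; cases A; cases C; cases F; simp)

lemma p1Y:
  fixes A C F be ka :: bool
  assumes "A\<and>C\<and>F \<Longrightarrow> ka"
  shows "2*of_bool A + 2*of_bool C + 2*of_bool F - 1 \<le> (3::real) + 4*of_bool be + 2*of_bool ka"
  using assms by (cases be; cases ka; cases A; cases C; cases F; simp)

lemma p3X:
  fixes A B C G be ka :: bool
  assumes "A\<and>C \<Longrightarrow> be" "A\<and>B \<Longrightarrow> be" "B\<and>C\<and>G \<Longrightarrow> ka"
  shows "of_bool A + of_bool B + of_bool C + of_bool G \<le> (2::real) + 2*of_bool be + of_bool ka"
  using assms by (cases be; cases ka; cases A; cases B; cases C; cases G; simp)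

lemma p3Y:
  fixes A B C G be ka :: bool
  assumes "(B\<and>C \<or> B\<and>G \<or> C\<and>G) \<Longrightarrow> be"
  shows "of_bool A + of_bool B + of_bool C + of_bool G + of_bool (\<not> A) \<le> (2::real) + 2*of_bool be + of_bool ka"
  using assms by (cases be; cases ka; cases A; cases B; cases C; cases G; simp)

lemma p4X:
  fixes A C F G be ka :: bool
  assumes "(A\<and>C \<or> A\<and>F \<or> C\<and>F) \<Longrightarrow> be"
  shows "of_bool A + of_bool C + of_bool F + of_bool G + 1 \<le> (3::real) + 2*of_bool be + of_bool ka"
  using assms by (cases be; cases ka; cases A; cases C; cases F; cases G; simp)

lemma p4Y:
  fixes A B C D F G P be ka :: bool
  assumes b3: "(B\<and>C \<or> B\<and>G \<or> C\<and>G) \<Longrightarrow> be"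
    and b4: "(P\<and>D\<and>F \<or> P\<and>D\<and>G \<or> P\<and>F\<and>G \<or> D\<and>F\<and>G) \<Longrightarrow> be"
    and k3: "A\<and>C\<and>F \<Longrightarrow> ka"
    and k4: "A\<and>B\<and>D \<Longrightarrow> ka"
  shows "of_bool A + of_bool B + of_bool C + of_bool D + of_bool F + of_bool G \<le> (3::real) + 2*of_bool be + of_bool ka"
  using assms
  by (cases be; cases ka; cases A; cases B; cases C; cases D; cases F; cases G; cases P; simp)
lemma bet_generic:
  assumes "x0 \<in> X" "y0 \<in> Y" "S \<subseteq> V" "x0 \<notin> S" "y0 \<notin> S" "card S = 3"
    "spans_K4minus E (S \<union> {x0})" "spans_K4minus E (S \<union> {y0})" "card Z = 5" "Z = S \<union> {x0,y0}"
  shows "spans_bridge1 V E X Y Z"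
  unfolding spans_bridge1_def bridge1_def connector1_def
  using assms by blast

locale L =
  fixes V :: "'a set" and E :: "'a set set" and X Y :: "'a set" and \<gamma> :: real
    and x x' y1 y2 :: 'a
  assumes H: "three_graph V E"
    and gam: "\<gamma> > 0"
    and deg: "real (min_codeg V E) \<ge> (1/2 - \<gamma>) * real (card V)"
    and partU: "X \<union> Y = V" and partI: "X \<inter> Y = {}"
    and mx: "x \<in> X" and mx': "x' \<in> X" and my1: "y1 \<in> Y" and my2: "y2 \<in> Y"
    and e1: "{x, y1, y2} \<in> E" and e2: "{x, x', y1} \<in> E" and e3: "{x, x', y2} \<in> E"
begin

definition "T = {x,x',y1,y2}"
definition "R = V - T"
definition "Zs = {Z. Z \<subseteq> V \<and> {x, x', y1, y2} \<subseteq> Z \<and> spans_bridge1 V E X Y Z}"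
definition "Ks = {K. K \<subseteq> V \<and> is_K4 E K \<and> card (K \<inter> X) = 2 \<and> card (K \<inter> Y) = 2
                     \<and> card (K \<inter> {x, x', y1, y2}) = 3}"
definition "bet v = spans_bridge1 V E X Y (insert v T)"
definition "kap v = (\<exists>K\<in>Ks. v \<in> K)"

lemma finV: "finite V" using H unfolding three_graph_def by auto
lemma Eprop: "e \<in> E \<Longrightarrow> e \<subseteq> V \<and> card e = 3" using H unfolding three_graph_def by auto
lemma XV: "X \<subseteq> V" and YV: "Y \<subseteq> V" using partU by auto
lemma inV: "x \<in> V" "x' \<in> V" "y1 \<in> V" "y2 \<in> V" using mx mx' my1 my2 XV YV by auto
lemma nX: "y1 \<notin> X" "y2 \<notin> X" "x \<notin> Y" "x' \<notin> Y" using partI mx mx' my1 my2 by auto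

lemma neqs: "x \<noteq> x'" "x \<noteq> y1" "x \<noteq> y2" "x' \<noteq> y1" "x' \<noteq> y2" "y1 \<noteq> y2"
proof -
  show "x \<noteq> x'"
  proof
    assume "x = x'" then have "{x,x',y1} = {x,y1}" by simp
    then have "card {x,x',y1} \<le> 2" by (simp add: card_insert_if)
    then show False using Eprop[OF e2] by simp
  qed
  show "y1 \<noteq> y2"
  proof
    assume "y1 = y2" then have "{x,y1,y2} = {x,y1}" by simp
    then have "card {x,y1,y2} \<le> 2" by (simp add: card_insert_if)
    then show False using Eprop[OF e1] by simp
  qed
qed (use nX mx mx' in auto)

lemma card_T: "card T = 4" using neqs unfolding T_def by simp
lemma TV: "T \<subseteq> V" using inV unfolding T_def by auto
lemma finR: "finite R" using finV unfolding R_def by auto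
lemma Rp: "v \<in> R \<Longrightarrow> v \<in> V \<and> v \<noteq> x \<and> v \<noteq> x' \<and> v \<noteq> y1 \<and> v \<noteq> y2"
  unfolding R_def T_def by auto
lemma sideY: "v \<in> V \<Longrightarrow> (v \<in> Y) = (v \<notin> X)" using partU partI by blast

lemma card_insT: "v \<in> R \<Longrightarrow> card (insert v T) = 5"
  using card_T finV TV unfolding R_def by (simp add: finite_subset)

lemma bet_intro:
  assumes v: "v \<in> R" and "x0 \<in> X" "y0 \<in> Y" "S \<subseteq> V" "x0 \<notin> S" "y0 \<notin> S" "card S = 3"
    "spans_K4minus E (S \<union> {x0})" "spans_K4minus E (S \<union> {y0})" "insert v T = S \<union> {x0,y0}"
  shows "bet v"
  unfolding bet_def by (rule bet_generic) (use assms card_insT[OF v] in auto)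

lemma BX1:
  assumes v: "v \<in> R" "v \<in> X" and h: "({x,x',v} \<in> E \<and> {x,y2,v} \<in> E) \<or> ({x,x',v} \<in> E \<and> {x',y2,v} \<in> E) \<or> ({x,y2,v} \<in> E \<and> {x',y2,v} \<in> E)"
  shows "bet v"
proof -
  note r = Rp[OF v(1)]
  have k1: "spans_K4minus E {x,x',y2,v}"
    by (rule K4m_count) (use r neqs e3 h in auto)
  have k2: "spans_K4minus E {x,x',y2,y1}"
    by (rule K4m_count) (use r neqs e1 e2 e3 in \<open>auto simp: insert_commute\<close>)
  show ?thesis
    by (rule bet_intro[of v v y1 "{x,x',y2}"]) (use v r neqs inV my1 k1 k2 in \<open>auto simp: T_def insert_commute\<close>)
qed


lemma BX2:
  assumes v: "v \<in> R" "v \<in> X" and h: "({x,x',v} \<in> E \<and> {x,y1,v} \<in> E) \<or> ({x,x',v} \<in> E \<and> {x',y1,v} \<in> E) \<or> ({x,y1,v} \<in> E \<and> {x',y1,v} \<in> E)"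
  shows "bet v"
proof -
  note r = Rp[OF v(1)]
  have k1: "spans_K4minus E {x,x',y1,v}"
    by (rule K4m_count) (use r neqs e2 h in auto)
  have k2: "spans_K4minus E {x,x',y1,y2}"
    by (rule K4m_count) (use r neqs e1 e2 e3 in \<open>auto simp: insert_commute\<close>)
  show ?thesis
    by (rule bet_intro[of v v y2 "{x,x',y1}"]) (use v r neqs inV my2 k1 k2 in \<open>auto simp: T_def insert_commute\<close>)
qed

lemma BY1:
  assumes v: "v \<in> R" "v \<in> Y" and h: "({x,y1,v} \<in> E \<and> {x,y2,v} \<in> E) \<or> ({x,y1,v} \<in> E \<and> {y1,y2,v} \<in> E) \<or> ({x,y2,v} \<in> E \<and> {y1,y2,v} \<in> E)"
  shows "bet v"
proof -
  note r = Rp[OF v(1)]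
  have k1: "spans_K4minus E {x,y1,y2,v}"
    by (rule K4m_count) (use r neqs e1 h in auto)
  have k2: "spans_K4minus E {x,y1,y2,x'}"
    by (rule K4m_count) (use r neqs e1 e2 e3 in \<open>auto simp: insert_commute\<close>)
  show ?thesis
    by (rule bet_intro[of v x' v "{x,y1,y2}"]) (use v r neqs inV mx' k1 k2 in \<open>auto simp: T_def insert_commute\<close>)
qed

lemma BY2:
  assumes v: "v \<in> R" "v \<in> Y" and h: "3 \<le> of_bool ({x',y1,y2} \<in> E) + of_bool ({x',y1,v} \<in> E) + of_bool ({x',y2,v} \<in> E) + (of_bool ({y1,y2,v} \<in> E)::nat)"
  shows "bet v"
proof -
  note r = Rp[OF v(1)]
  have k1: "spans_K4minus E {x',y1,y2,v}"
    by (rule K4m_count) (use r neqs h in auto)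
  have k2: "spans_K4minus E {x',y1,y2,x}"
    by (rule K4m_count) (use r neqs e1 e2 e3 in \<open>auto simp: insert_commute\<close>)
  show ?thesis
    by (rule bet_intro[of v x v "{x',y1,y2}"]) (use v r neqs inV mx k1 k2 in \<open>auto simp: T_def insert_commute\<close>)
qed

lemma kapI:
  assumes "K \<subseteq> V" "is_K4 E K" "card (K \<inter> X) = 2" "card (K \<inter> Y) = 2" "card (K \<inter> T) = 3" "v \<in> K"
  shows "kap v"
  unfolding kap_def Ks_def using assms unfolding T_def by blast

lemma kapI2:
  assumes "K \<subseteq> V" "is_K4 E K" "K \<inter> X = A2" "card A2 = 2" "K \<inter> Y = B2" "card B2 = 2"
    "K \<inter> T = C3" "card C3 = 3" "v \<in> K"
  shows "kap v"
  by (rule kapI) (use assms in simp_all)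

lemma KX1:
  assumes v: "v \<in> R" "v \<in> X" and h: "{x',y1,y2} \<in> E" "{x',y1,v} \<in> E" "{x',y2,v} \<in> E" "{y1,y2,v} \<in> E"
  shows "kap v"
proof -
  note r = Rp[OF v(1)]
  have k4: "is_K4 E {x',y1,y2,v}" by (rule K4_intro) (use r neqs h in auto)
  have i1: "{x',y1,y2,v} \<inter> X = {x',v}" using v mx' nX by auto
  have i2: "{x',y1,y2,v} \<inter> Y = {y1,y2}" using v sideY r my1 my2 nX by auto
  have i3: "{x',y1,y2,v} \<inter> T = {x',y1,y2}" using r unfolding T_def by auto
  show ?thesis
    by (rule kapI2[OF _ k4 i1 _ i2 _ i3]) (use r neqs inV v in auto)
qed

lemma KX2:
  assumes v: "v \<in> R" "v \<in> X" and h: "{x,y1,v} \<in> E" "{x,y2,v} \<in> E" "{y1,y2,v} \<in> E"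
  shows "kap v"
proof -
  note r = Rp[OF v(1)]
  have k4: "is_K4 E {x,y1,y2,v}" by (rule K4_intro) (use r neqs h e1 in auto)
  have i1: "{x,y1,y2,v} \<inter> X = {x,v}" using v mx nX by auto
  have i2: "{x,y1,y2,v} \<inter> Y = {y1,y2}" using v sideY r my1 my2 nX by auto
  have i3: "{x,y1,y2,v} \<inter> T = {x,y1,y2}" using r unfolding T_def by auto
  show ?thesis
    by (rule kapI2[OF _ k4 i1 _ i2 _ i3]) (use r neqs inV v in auto)
qed

lemma KY1:
  assumes v: "v \<in> R" "v \<in> Y" and h: "{x,x',v} \<in> E" "{x,y2,v} \<in> E" "{x',y2,v} \<in> E"
  shows "kap v"
proof -
  note r = Rp[OF v(1)]
  have k4: "is_K4 E {x,x',y2,v}" by (rule K4_intro) (use r neqs h e3 in auto)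
  have i1: "{x,x',y2,v} \<inter> X = {x,x'}" using v mx mx' nX partI by auto
  have i2: "{x,x',y2,v} \<inter> Y = {y2,v}" using v my2 nX by auto
  have i3: "{x,x',y2,v} \<inter> T = {x,x',y2}" using r unfolding T_def by auto
  show ?thesis
    by (rule kapI2[OF _ k4 i1 _ i2 _ i3]) (use r neqs inV v in auto)
qed

lemma KY2:
  assumes v: "v \<in> R" "v \<in> Y" and h: "{x,x',v} \<in> E" "{x,y1,v} \<in> E" "{x',y1,v} \<in> E"
  shows "kap v"
proof -
  note r = Rp[OF v(1)]
  have k4: "is_K4 E {x,x',y1,v}" by (rule K4_intro) (use r neqs h e2 in auto)
  have i1: "{x,x',y1,v} \<inter> X = {x,x'}" using v mx mx' nX partI by auto
  have i2: "{x,x',y1,v} \<inter> Y = {y1,v}" using v my1 nX by auto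
  have i3: "{x,x',y1,v} \<inter> T = {x,x',y1}" using r unfolding T_def by auto
  show ?thesis
    by (rule kapI2[OF _ k4 i1 _ i2 _ i3]) (use r neqs inV v in auto)
qed


lemma nbh_sub: "nbh V E u w \<subseteq> V" unfolding nbh_def by auto

lemma codeg:
  assumes "u \<in> V" "w \<in> V" "u \<noteq> w"
  shows "(1/2 - \<gamma>) * real (card V) \<le> real (card (nbh V E u w))"
proof -
  let ?S = "{card (nbh V E u v) | u v. u \<in> V \<and> v \<in> V \<and> u \<noteq> v}"
  have "?S \<subseteq> {..card V}"
    using card_mono[OF finV nbh_sub] by auto
  then have fin: "finite ?S" using finite_subset by blast
  have "card (nbh V E u w) \<in> ?S" using assms by blast
  then have "min_codeg V E \<le> card (nbh V E u w)"
    unfolding min_codeg_def using fin by simp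
  then show ?thesis using deg by linarith
qed

lemma notin_nbh: "u \<notin> nbh V E u w" "w \<notin> nbh V E u w"
proof -
  have c: "card {u,w} \<le> 2" by (simp add: card_insert_if)
  have "{u,w} \<notin> E" using Eprop c by fastforce
  moreover have "{u,w,u} = {u,w}" "{u,w,w} = {u,w}" by auto
  ultimately show "u \<notin> nbh V E u w" "w \<notin> nbh V E u w" unfolding nbh_def by auto
qed

lemma nbhR:
  assumes "u \<in> T" "w \<in> T" "u \<noteq> w"
  shows "real (card (nbh V E u w)) \<le> real (card (R \<inter> nbh V E u w)) + 2"
proof -
  have sub: "nbh V E u w \<subseteq> (R \<inter> nbh V E u w) \<union> (T - {u,w})"
  proof
    fix z assume z: "z \<in> nbh V E u w"
    have "z \<noteq> u" "z \<noteq> w" using z notin_nbh by metis+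
    then show "z \<in> (R \<inter> nbh V E u w) \<union> (T - {u,w})" using z nbh_sub unfolding R_def by auto
  qed
  have fT: "finite T" using finV TV finite_subset by blast
  have "card (T - {u,w}) = card T - card {u,w}"
    by (rule card_Diff_subset) (use assms in auto)
  then have c2: "card (T - {u,w}) = 2" using card_T assms by simp
  have "card (nbh V E u w) \<le> card ((R \<inter> nbh V E u w) \<union> (T - {u,w}))"
    by (rule card_mono) (use finR fT sub in auto)
  also have "\<dots> \<le> card (R \<inter> nbh V E u w) + card (T - {u,w})" by (rule card_Un_le)
  finally show ?thesis using c2 by simp
qed

lemma codegR:
  assumes "u \<in> T" "w \<in> T" "u \<noteq> w"
  shows "(1/2 - \<gamma>) * real (card V) - 2 \<le> real (card (R \<inter> nbh V E u w))"
proof -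
  have "u \<in> V" "w \<in> V" using assms TV by auto
  then show ?thesis using codeg[of u w] nbhR[OF assms] assms by linarith
qed

lemma finZs: "finite Zs"
  by (rule finite_subset[of _ "Pow V"]) (auto simp: Zs_def finV)
lemma finKs: "finite Ks"
  by (rule finite_subset[of _ "Pow V"]) (auto simp: Ks_def finV)

lemma cb_le: "card (R \<inter> {v. bet v}) \<le> card Zs"
proof (rule card_inj_on_le[of "\<lambda>v. insert v T"])
  show "inj_on (\<lambda>v. insert v T) (R \<inter> {v. bet v})"
  proof (rule inj_onI)
    fix v w assume "v \<in> R \<inter> {v. bet v}" "w \<in> R \<inter> {v. bet v}" "insert v T = insert w T"
    then show "v = w" unfolding R_def by blast
  qed
  show "(\<lambda>v. insert v T) ` (R \<inter> {v. bet v}) \<subseteq> Zs"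
    using TV unfolding Zs_def bet_def R_def T_def by auto
qed (rule finZs)

lemma ck_le: "card (R \<inter> {v. kap v}) \<le> card Ks"
proof -
  define f where "f v = (SOME K. K \<in> Ks \<and> v \<in> K)" for v
  have fK: "f v \<in> Ks \<and> v \<in> f v" if "kap v" for v
    using that unfolding kap_def f_def by (metis (mono_tags, lifting) someI_ex)
  show ?thesis
  proof (rule card_inj_on_le[of f])
    show "inj_on f (R \<inter> {v. kap v})"
    proof (rule inj_onI)
      fix v w assume v: "v \<in> R \<inter> {v. kap v}" and w: "w \<in> R \<inter> {v. kap v}" and eq: "f v = f w"
      define K where "K = f v"
      have K: "K \<in> Ks" "v \<in> K" "w \<in> K" using fK v w eq unfolding K_def by auto
      have c4: "card K = 4" and c3: "card (K \<inter> T) = 3"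
        using K(1) unfolding Ks_def is_K4_def T_def by auto
      have fin: "finite K" using c4 card.infinite by fastforce
      have "card (K - T) = card K - card (K \<inter> T)"
        by (rule card_Diff_subset_Int) (use fin in auto)
      then have "card (K - T) = 1" using c4 c3 by simp
      then obtain z where z: "K - T = {z}" by (rule card_1_singletonE)
      have "v \<in> K - T" "w \<in> K - T" using K v w unfolding R_def by auto
      then show "v = w" using z by auto
    qed
    show "f ` (R \<inter> {v. kap v}) \<subseteq> Ks" using fK by auto
  qed (rule finKs)
qed


lemma mem: "v \<in> V \<Longrightarrow> (v \<in> nbh V E a b) = ({a,b,v} \<in> E)" unfolding nbh_def by auto

lemma loc1:
  assumes v: "v \<in> R"
  shows "2*of_bool (v \<in> nbh V E x x') + 2*of_bool (v \<in> nbh V E x y2) + 2*of_bool (v \<in> nbh V E x' y2) + of_bool (v \<in> X) - of_bool (v \<in> Y) \<le> (3::real) + 4*of_bool (bet v) + 2*of_bool (kap v)"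
proof -
  have vV: "v \<in> V" using Rp v by auto
  note m = mem[OF vV]
  show ?thesis
  proof (cases "v \<in> X")
    case True
    then have nY: "v \<notin> Y" using sideY vV by auto
    have "2*of_bool (v \<in> nbh V E x x') + 2*of_bool (v \<in> nbh V E x y2) + 2*of_bool (v \<in> nbh V E x' y2) + 1 \<le> (3::real) + 4*of_bool (bet v) + 2*of_bool (kap v)"
      apply (rule p1X) apply (rule BX1[OF v True]) by (simp add: m)
    then show ?thesis using True nY by simp
  next
    case False then have vY: "v \<in> Y" using sideY vV by auto
    have "2*of_bool (v \<in> nbh V E x x') + 2*of_bool (v \<in> nbh V E x y2) + 2*of_bool (v \<in> nbh V E x' y2) - 1 \<le> (3::real) + 4*of_bool (bet v) + 2*of_bool (kap v)"
      apply (rule p1Y) apply (rule KY1[OF v vY]) by (simp_all add: m)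
    then show ?thesis using False vY by simp
  qed
qed

lemma loc2:
  assumes v: "v \<in> R"
  shows "2*of_bool (v \<in> nbh V E x y1) + 2*of_bool (v \<in> nbh V E x y2) + 2*of_bool (v \<in> nbh V E y1 y2) + of_bool (v \<in> Y) - of_bool (v \<in> X) \<le> (3::real) + 4*of_bool (bet v) + 2*of_bool (kap v)"
proof -
  have vV: "v \<in> V" using Rp v by auto
  note m = mem[OF vV]
  show ?thesis
  proof (cases "v \<in> X")
    case False then have vY: "v \<in> Y" using sideY vV by auto
    have "2*of_bool (v \<in> nbh V E x y1) + 2*of_bool (v \<in> nbh V E x y2) + 2*of_bool (v \<in> nbh V E y1 y2) + 1 \<le> (3::real) + 4*of_bool (bet v) + 2*of_bool (kap v)"
      apply (rule p1X) apply (rule BY1[OF v vY]) by (simp add: m)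
    then show ?thesis using False vY by simp
  next
    case True
    then have nY: "v \<notin> Y" using sideY vV by auto
    have "2*of_bool (v \<in> nbh V E x y1) + 2*of_bool (v \<in> nbh V E x y2) + 2*of_bool (v \<in> nbh V E y1 y2) - 1 \<le> (3::real) + 4*of_bool (bet v) + 2*of_bool (kap v)"
      apply (rule p1Y) apply (rule KX2[OF v True]) by (simp_all add: m)
    then show ?thesis using True nY by simp
  qed
qed

lemma loc3:
  assumes v: "v \<in> R"
  shows "of_bool (v \<in> nbh V E x x') + of_bool (v \<in> nbh V E x y1) + of_bool (v \<in> nbh V E x y2) + of_bool (v \<in> nbh V E y1 y2) + of_bool (v \<in> Y - nbh V E x x') \<le> (2::real) + 2*of_bool (bet v) + of_bool (kap v)"
proof -
  have vV: "v \<in> V" using Rp v by auto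
  note m = mem[OF vV]
  show ?thesis
  proof (cases "v \<in> X")
    case True
    then have nY: "v \<notin> Y" using sideY vV by auto
    have "of_bool (v \<in> nbh V E x x') + of_bool (v \<in> nbh V E x y1) + of_bool (v \<in> nbh V E x y2) + of_bool (v \<in> nbh V E y1 y2) \<le> (2::real) + 2*of_bool (bet v) + of_bool (kap v)"
      apply (rule p3X)
        apply (rule BX1[OF v True]) apply (simp add: m)
       apply (rule BX2[OF v True]) apply (simp add: m)
      apply (rule KX2[OF v True]) by (simp_all add: m)
    then show ?thesis using True nY by simp
  next
    case False then have vY: "v \<in> Y" using sideY vV by auto
    have "of_bool (v \<in> nbh V E x x') + of_bool (v \<in> nbh V E x y1) + of_bool (v \<in> nbh V E x y2) + of_bool (v \<in> nbh V E y1 y2) + of_bool (\<not> (v \<in> nbh V E x x')) \<le> (2::real) + 2*of_bool (bet v) + of_bool (kap v)"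
      apply (rule p3Y) apply (rule BY1[OF v vY]) by (simp add: m)
    then show ?thesis using False vY by simp
  qed
qed

lemma loc4:
  assumes v: "v \<in> R"
  shows "of_bool (v \<in> nbh V E x x') + of_bool (v \<in> nbh V E x y1) + of_bool (v \<in> nbh V E x y2) + of_bool (v \<in> nbh V E x' y1) + of_bool (v \<in> nbh V E x' y2) + of_bool (v \<in> nbh V E y1 y2) + of_bool (v \<in> X) - of_bool (v \<in> X \<inter> nbh V E x y1) - of_bool (v \<in> X \<inter> nbh V E x' y1) \<le> (3::real) + 2*of_bool (bet v) + of_bool (kap v)"
proof -
  have vV: "v \<in> V" using Rp v by auto
  note m = mem[OF vV]
  show ?thesis
  proof (cases "v \<in> X")
    case True
    have "of_bool (v \<in> nbh V E x x') + of_bool (v \<in> nbh V E x y2) + of_bool (v \<in> nbh V E x' y2) + of_bool (v \<in> nbh V E y1 y2) + 1 \<le> (3::real) + 2*of_bool (bet v) + of_bool (kap v)"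
      apply (rule p4X) apply (rule BX1[OF v True]) by (simp add: m)
    then show ?thesis using True by simp
  next
    case False then have vY: "v \<in> Y" using sideY vV by auto
    have "of_bool (v \<in> nbh V E x x') + of_bool (v \<in> nbh V E x y1) + of_bool (v \<in> nbh V E x y2) + of_bool (v \<in> nbh V E x' y1) + of_bool (v \<in> nbh V E x' y2) + of_bool (v \<in> nbh V E y1 y2) \<le> (3::real) + 2*of_bool (bet v) + of_bool (kap v)"
      apply (rule p4Y[where P = "{x',y1,y2} \<in> E"])
         apply (rule BY1[OF v vY]) apply (simp add: m)
        apply (rule BY2[OF v vY]) apply (auto simp add: m)[1]
       apply (rule KY1[OF v vY]) apply (simp_all add: m)[3]
      apply (rule KY2[OF v vY]) by (simp_all add: m)
    then show ?thesis using False by simp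
  qed
qed


lemma sums:
  shows "2*real (card (R \<inter> nbh V E x x')) + 2*real (card (R \<inter> nbh V E x y2)) + 2*real (card (R \<inter> nbh V E x' y2)) + real (card (R \<inter> X)) - real (card (R \<inter> Y))
     \<le> 3*real (card R) + 4*real (card (R \<inter> {v. bet v})) + 2*real (card (R \<inter> {v. kap v}))"
    and "2*real (card (R \<inter> nbh V E x y1)) + 2*real (card (R \<inter> nbh V E x y2)) + 2*real (card (R \<inter> nbh V E y1 y2)) + real (card (R \<inter> Y)) - real (card (R \<inter> X))
     \<le> 3*real (card R) + 4*real (card (R \<inter> {v. bet v})) + 2*real (card (R \<inter> {v. kap v}))"
    and "real (card (R \<inter> nbh V E x x')) + real (card (R \<inter> nbh V E x y1)) + real (card (R \<inter> nbh V E x y2)) + real (card (R \<inter> nbh V E y1 y2)) + real (card (R \<inter> (Y - nbh V E x x')))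
     \<le> 2*real (card R) + 2*real (card (R \<inter> {v. bet v})) + real (card (R \<inter> {v. kap v}))"
    and "real (card (R \<inter> nbh V E x x')) + real (card (R \<inter> nbh V E x y1)) + real (card (R \<inter> nbh V E x y2)) + real (card (R \<inter> nbh V E x' y1)) + real (card (R \<inter> nbh V E x' y2)) + real (card (R \<inter> nbh V E y1 y2))
      + real (card (R \<inter> X)) - real (card (R \<inter> {v \<in> X. v \<in> nbh V E x y1})) - real (card (R \<inter> {v \<in> X. v \<in> nbh V E x' y1}))
     \<le> 3*real (card R) + 2*real (card (R \<inter> {v. bet v})) + real (card (R \<inter> {v. kap v}))"
proof -
  note fR = finR
  have "(\<Sum>v\<in>R. 2*of_bool (v \<in> nbh V E x x') + 2*of_bool (v \<in> nbh V E x y2) + 2*of_bool (v \<in> nbh V E x' y2) + of_bool (v \<in> X) - of_bool (v \<in> Y))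
     \<le> (\<Sum>v\<in>R. (3::real) + 4*of_bool (bet v) + 2*of_bool (kap v))"
    by (rule sum_mono) (rule loc1)
  then show "2*real (card (R \<inter> nbh V E x x')) + 2*real (card (R \<inter> nbh V E x y2)) + 2*real (card (R \<inter> nbh V E x' y2)) + real (card (R \<inter> X)) - real (card (R \<inter> Y))
     \<le> 3*real (card R) + 4*real (card (R \<inter> {v. bet v})) + 2*real (card (R \<inter> {v. kap v}))"
    using fR by (simp add: sum.distrib sum_subtractf flip: sum_distrib_left)
  have "(\<Sum>v\<in>R. 2*of_bool (v \<in> nbh V E x y1) + 2*of_bool (v \<in> nbh V E x y2) + 2*of_bool (v \<in> nbh V E y1 y2) + of_bool (v \<in> Y) - of_bool (v \<in> X))
     \<le> (\<Sum>v\<in>R. (3::real) + 4*of_bool (bet v) + 2*of_bool (kap v))"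
    by (rule sum_mono) (rule loc2)
  then show "2*real (card (R \<inter> nbh V E x y1)) + 2*real (card (R \<inter> nbh V E x y2)) + 2*real (card (R \<inter> nbh V E y1 y2)) + real (card (R \<inter> Y)) - real (card (R \<inter> X))
     \<le> 3*real (card R) + 4*real (card (R \<inter> {v. bet v})) + 2*real (card (R \<inter> {v. kap v}))"
    using fR by (simp add: sum.distrib sum_subtractf flip: sum_distrib_left)
  have "(\<Sum>v\<in>R. of_bool (v \<in> nbh V E x x') + of_bool (v \<in> nbh V E x y1) + of_bool (v \<in> nbh V E x y2) + of_bool (v \<in> nbh V E y1 y2) + of_bool (v \<in> Y - nbh V E x x'))
     \<le> (\<Sum>v\<in>R. (2::real) + 2*of_bool (bet v) + of_bool (kap v))"
    by (rule sum_mono) (rule loc3)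
  then show "real (card (R \<inter> nbh V E x x')) + real (card (R \<inter> nbh V E x y1)) + real (card (R \<inter> nbh V E x y2)) + real (card (R \<inter> nbh V E y1 y2)) + real (card (R \<inter> (Y - nbh V E x x')))
     \<le> 2*real (card R) + 2*real (card (R \<inter> {v. bet v})) + real (card (R \<inter> {v. kap v}))"
    using fR by (simp add: sum.distrib sum_subtractf set_diff_eq flip: sum_distrib_left)
  have "(\<Sum>v\<in>R. of_bool (v \<in> nbh V E x x') + of_bool (v \<in> nbh V E x y1) + of_bool (v \<in> nbh V E x y2) + of_bool (v \<in> nbh V E x' y1) + of_bool (v \<in> nbh V E x' y2) + of_bool (v \<in> nbh V E y1 y2) + of_bool (v \<in> X) - of_bool (v \<in> X \<inter> nbh V E x y1) - of_bool (v \<in> X \<inter> nbh V E x' y1))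
     \<le> (\<Sum>v\<in>R. (3::real) + 2*of_bool (bet v) + of_bool (kap v))"
    by (rule sum_mono) (rule loc4)
  then show "real (card (R \<inter> nbh V E x x')) + real (card (R \<inter> nbh V E x y1)) + real (card (R \<inter> nbh V E x y2)) + real (card (R \<inter> nbh V E x' y1)) + real (card (R \<inter> nbh V E x' y2)) + real (card (R \<inter> nbh V E y1 y2))
      + real (card (R \<inter> X)) - real (card (R \<inter> {v \<in> X. v \<in> nbh V E x y1})) - real (card (R \<inter> {v \<in> X. v \<in> nbh V E x' y1}))
     \<le> 3*real (card R) + 2*real (card (R \<inter> {v. bet v})) + real (card (R \<inter> {v. kap v}))"
    using fR by (simp add: sum.distrib sum_subtractf flip: sum_distrib_left)
qed


lemma main:
  shows "real (card Zs) \<ge> \<gamma> * real (card V) / 4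
       \<or> real (card Ks) \<ge> \<gamma> * real (card V) / 4
       \<or> ((1/2 - 15*\<gamma>/4) * real (card V) \<le> real (card X)
          \<and> real (card X) \<le> (1/2 + 15*\<gamma>/4) * real (card V)
          \<and> (1/2 - 15*\<gamma>/4) * real (card V) \<le> real (card Y)
          \<and> real (card Y) \<le> (1/2 + 15*\<gamma>/4) * real (card V)
          \<and> typical V E (26*\<gamma>) X Y x x' y1)"
proof (cases "real (card Zs) \<ge> \<gamma> * real (card V) / 4 \<or> real (card Ks) \<ge> \<gamma> * real (card V) / 4")
  case True then show ?thesis by blast
next
  case False
  define n where "n = real (card V)"
  define g where "g = \<gamma> * n"
  have hZ: "real (card Zs) < g/4" and hK: "real (card Ks) < g/4" using False unfolding g_def n_def by auto
  have hb: "real (card (R \<inter> {v. bet v})) < g/4" using cb_le hZ by (meson le_less_trans of_nat_le_iff)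
  have hk: "real (card (R \<inter> {v. kap v})) < g/4" using ck_le hK by (meson le_less_trans of_nat_le_iff)
  have hb0: "0 \<le> real (card (R \<inter> {v. bet v}))" by simp
  have hk0: "0 \<le> real (card (R \<inter> {v. kap v}))" by simp
  have cR: "card V = card R + 4"
    using card_Diff_subset[OF _ TV] card_T finV TV unfolding R_def
    by (metis add.commute card_mono le_add_diff_inverse finite_subset)
  have xR: "x \<notin> R" "x' \<notin> R" "y1 \<notin> R" "y2 \<notin> R" unfolding R_def T_def by auto
  have fX: "finite X" and fY: "finite Y" using finV XV YV finite_subset by auto
  have cX: "card X = card (R \<inter> X) + 2"
  proof -
    have "X = (R \<inter> X) \<union> {x,x'}" using XV mx mx' nX unfolding R_def T_def by auto
    moreover have "card ((R \<inter> X) \<union> {x,x'}) = card (R \<inter> X) + card {x,x'}"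
      by (rule card_Un_disjoint) (use finR xR in auto)
    ultimately show ?thesis using neqs by simp
  qed
  have cY: "card Y = card (R \<inter> Y) + 2"
  proof -
    have "Y = (R \<inter> Y) \<union> {y1,y2}" using YV my1 my2 nX unfolding R_def T_def by auto
    moreover have "card ((R \<inter> Y) \<union> {y1,y2}) = card (R \<inter> Y) + card {y1,y2}"
      by (rule card_Un_disjoint) (use finR xR in auto)
    ultimately show ?thesis using neqs by simp
  qed
  have cRXY: "card R = card (R \<inter> X) + card (R \<inter> Y)"
  proof -
    have "R = (R \<inter> X) \<union> (R \<inter> Y)" using partU unfolding R_def by auto
    moreover have "card ((R \<inter> X) \<union> (R \<inter> Y)) = card (R \<inter> X) + card (R \<inter> Y)"
      by (rule card_Un_disjoint) (use finR partI in auto)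
    ultimately show ?thesis by simp
  qed
  have dd: "(1/2 - \<gamma>) * real (card V) - 2 = n/2 - g - 2" unfolding g_def n_def by (simp add: algebra_simps)
  have tT: "x \<in> T" "x' \<in> T" "y1 \<in> T" "y2 \<in> T" unfolding T_def by auto
  have cA: "n/2 - g - 2 \<le> real (card (R \<inter> nbh V E x x'))" using codegR[OF tT(1,2)] neqs dd by auto
  have cB: "n/2 - g - 2 \<le> real (card (R \<inter> nbh V E x y1))" using codegR[OF tT(1,3)] neqs dd by auto
  have cC: "n/2 - g - 2 \<le> real (card (R \<inter> nbh V E x y2))" using codegR[OF tT(1,4)] neqs dd by auto
  have cD: "n/2 - g - 2 \<le> real (card (R \<inter> nbh V E x' y1))" using codegR[OF tT(2,3)] neqs dd by auto
  have cF: "n/2 - g - 2 \<le> real (card (R \<inter> nbh V E x' y2))" using codegR[OF tT(2,4)] neqs dd by auto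
  have cG: "n/2 - g - 2 \<le> real (card (R \<inter> nbh V E y1 y2))" using codegR[OF tT(3,4)] neqs dd by auto
  have nR: "n = real (card R) + 4" using cR unfolding n_def by simp
  have rX: "real (card X) = real (card (R \<inter> X)) + 2" using cX by simp
  have rY: "real (card Y) = real (card (R \<inter> Y)) + 2" using cY by simp
  have rXY: "real (card R) = real (card (R \<inter> X)) + real (card (R \<inter> Y))" using cRXY by simp
  note S = sums
  have XY: "real (card X) - real (card Y) < 15/2 * g"
    using S(1) cA cC cF nR rX rY hb hk by linarith
  have YX: "real (card Y) - real (card X) < 15/2 * g"
    using S(2) cB cC cG nR rX rY hb hk by linarith
  have nXY: "n = real (card X) + real (card Y)" using nR rX rY rXY by linarith
  have e1': "(1/2 - 15*\<gamma>/4) * real (card V) = n/2 - 15/4*g" unfolding g_def n_def by (simp add: algebra_simps)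
  have e2': "(1/2 + 15*\<gamma>/4) * real (card V) = n/2 + 15/4*g" unfolding g_def n_def by (simp add: algebra_simps)
  have e3': "(26*\<gamma>) * real (card V) = 26*g" unfolding g_def n_def by (simp add: algebra_simps)
  have g0: "0 < g"
  proof -
    have "card V > 0" using finV inV card_gt_0_iff by blast
    then show ?thesis unfolding g_def n_def using gam by simp
  qed
  have T1: "real (card (nbh V E x x' \<inter> Y)) \<ge> real (card Y) - 26*g"
  proof -
    have q: "real (card (R \<inter> (Y - nbh V E x x'))) < 19/4 * g"
      using S(3) cA cB cC cG nR hb hk hb0 hk0 by linarith
    have sub: "Y - nbh V E x x' \<subseteq> R \<inter> (Y - nbh V E x x')"
    proof
      fix z assume z: "z \<in> Y - nbh V E x x'"
      have "y1 \<in> nbh V E x x'" "y2 \<in> nbh V E x x'" using e2 e3 inV unfolding nbh_def by (auto simp: insert_commute)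
      then show "z \<in> R \<inter> (Y - nbh V E x x')" using z YV nX unfolding R_def T_def by auto
    qed
    have "card (Y - nbh V E x x') \<le> card (R \<inter> (Y - nbh V E x x'))"
      by (rule card_mono[OF _ sub]) (use finR in auto)
    moreover have "card Y = card (Y \<inter> nbh V E x x') + card (Y - nbh V E x x')"
      by (rule card_Int_Diff) (rule fY)
    ultimately show ?thesis using q g0 by (simp add: Int_commute)
  qed
  have T2: "real (card (nbh V E x y1 \<inter> nbh V E x' y1 \<inter> X)) \<le> 26*g"
  proof -
    have sub: "nbh V E x y1 \<inter> nbh V E x' y1 \<inter> X \<subseteq> R \<inter> {v. bet v}"
    proof
      fix z assume z: "z \<in> nbh V E x y1 \<inter> nbh V E x' y1 \<inter> X"
      have "z \<noteq> x" "z \<noteq> x'" using z notin_nbh by blast+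
      then have zR: "z \<in> R" using z nX nbh_sub unfolding R_def T_def by auto
      have zV: "z \<in> V" using zR Rp by auto
      have "bet z" by (rule BX2[OF zR]) (use z mem[OF zV] in auto)
      then show "z \<in> R \<inter> {v. bet v}" using zR by auto
    qed
    have "card (nbh V E x y1 \<inter> nbh V E x' y1 \<inter> X) \<le> card (R \<inter> {v. bet v})"
      by (rule card_mono[OF _ sub]) (use finR in auto)
    then show ?thesis using hb g0 by linarith
  qed
  have T3: "real (card X) - 26*g \<le> real (card (nbh V E x y1 \<inter> X)) + real (card (nbh V E x' y1 \<inter> X))"
  proof -
    have q: "real (card (R \<inter> X)) - real (card (R \<inter> {v \<in> X. v \<in> nbh V E x y1})) - real (card (R \<inter> {v \<in> X. v \<in> nbh V E x' y1})) < 27/4 * g"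
      using S(4) cA cB cC cD cF cG nR hb hk hb0 hk0 by linarith
    have m1: "x' \<in> nbh V E x y1" "x \<in> nbh V E x' y1" using e2 inV unfolding nbh_def by (auto simp: insert_commute)
    have fN: "finite (nbh V E a b \<inter> X)" for a b using fX by auto
    have s1: "insert x' (R \<inter> {v \<in> X. v \<in> nbh V E x y1}) \<subseteq> nbh V E x y1 \<inter> X" using m1 mx' by auto
    have s2: "insert x (R \<inter> {v \<in> X. v \<in> nbh V E x' y1}) \<subseteq> nbh V E x' y1 \<inter> X" using m1 mx by auto
    have "card (insert x' (R \<inter> {v \<in> X. v \<in> nbh V E x y1})) = card (R \<inter> {v \<in> X. v \<in> nbh V E x y1}) + 1"
      using finR xR by simp
    then have k1: "card (R \<inter> {v \<in> X. v \<in> nbh V E x y1}) + 1 \<le> card (nbh V E x y1 \<inter> X)"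
      using card_mono[OF fN s1] by simp
    have "card (insert x (R \<inter> {v \<in> X. v \<in> nbh V E x' y1})) = card (R \<inter> {v \<in> X. v \<in> nbh V E x' y1}) + 1"
      using finR xR by simp
    then have k2: "card (R \<inter> {v \<in> X. v \<in> nbh V E x' y1}) + 1 \<le> card (nbh V E x' y1 \<inter> X)"
      using card_mono[OF fN s2] by simp
    show ?thesis using q k1 k2 rX g0 by linarith
  qed
  have hty: "typical V E (26*\<gamma>) X Y x x' y1"
    unfolding typical_def e3' using mx mx' my1 T1 T2 T3 by (simp add: Int_assoc)
  have f1: "n/2 - 15/4*g \<le> real (card X)" "real (card X) \<le> n/2 + 15/4*g"
    "n/2 - 15/4*g \<le> real (card Y)" "real (card Y) \<le> n/2 + 15/4*g"
    using XY YX nXY by linarith+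
  show ?thesis
    unfolding e1' e2' using f1 hty by blast
qed

end
theorem lemma5p11:
  fixes V :: "'a set" and E :: "'a set set" and X Y :: "'a set" and \<gamma> :: real
    and x x' y1 y2 :: 'a
  assumes H: "three_graph V E"
    and gam: "\<gamma> > 0"
    and deg: "real (min_codeg V E) \<ge> (1/2 - \<gamma>) * real (card V)"
    and part: "X \<union> Y = V" "X \<inter> Y = {}"
    and mem: "x \<in> X" "x' \<in> X" "y1 \<in> Y" "y2 \<in> Y"
    and edges: "{x, y1, y2} \<in> E" "{x, x', y1} \<in> E" "{x, x', y2} \<in> E"
  shows "real (card {Z. Z \<subseteq> V \<and> {x, x', y1, y2} \<subseteq> Z \<and> spans_bridge1 V E X Y Z})
           \<ge> \<gamma> * real (card V) / 4
       \<or> real (card {K. K \<subseteq> V \<and> is_K4 E K \<and> card (K \<inter> X) = 2 \<and> card (K \<inter> Y) = 2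
                     \<and> card (K \<inter> {x, x', y1, y2}) = 3}) \<ge> \<gamma> * real (card V) / 4
       \<or> ((1/2 - 15*\<gamma>/4) * real (card V) \<le> real (card X)
          \<and> real (card X) \<le> (1/2 + 15*\<gamma>/4) * real (card V)
          \<and> (1/2 - 15*\<gamma>/4) * real (card V) \<le> real (card Y)
          \<and> real (card Y) \<le> (1/2 + 15*\<gamma>/4) * real (card V)
          \<and> typical V E (26*\<gamma>) X Y x x' y1)"
proof -
  interpret L V E X Y \<gamma> x x' y1 y2
    apply unfold_locales using assms by auto
  show ?thesis using main[unfolded Zs_def Ks_def] .
qed

end
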